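(* Let $\mathcal H$ be a separable Hilbert space and $\mathcal L$ a densely defined positive (self-adjoint) operator on $\mathcal H$ with discrete spectrum $\{\lambda_\xi\}_{\xi\in\mathbb N}$ (eigenvalues counted with multiplicity) whose eigenvectors $\{e_\xi\}$ form an orthonormal basis of $\mathcal H$. Let $\lambda_0:=\inf_{\xi}\lambda_\xi\geq 0$, let $b>0$ and $m\in\mathbb R$, and assume $\lambda_0+m>0$. Let $u$ be the solution of the Cauchy problem $$\partial_t^2u(t)+\mathcal L u(t)+b\,\partial_t u(t)+m\,u(t)=0,\quad t>0,\qquad u(0)=u_0,\quad \partial_t u(0)=u_1 .$$ Then for all $\alpha\in\mathbb N_0$ and $\beta\geq 0$: if $0<b<2\sqrt{\lambda_0+m}$, $$\|\partial_t^\alpha\mathcal L^\beta u(t)\|_{\mathcal H}\lesssim e^{-\frac b2 t}\big(\|u_0\|_{H^{\alpha+2\beta}_{\mathcal L}}+\|u_1\|_{H^{\alpha-1+2\beta}_{\mathcal L}}\big);$$ if $b=2\sqrt{\lambda_0+m}$, $$\|\partial_t^\alpha\mathcal L^\beta u(t)\|_{\mathcal H}\lesssim (1+t)e^{-\frac b2 t}\big(\|u_0\|_{H^{\alpha+2\beta}_{\mathcal L}}+\|u_1\|_{H^{\alpha-1+2\beta}_{\mathcal L}}\big);$$ if $2\sqrt{\lambda_0+m}<b$, $$\|\partial_t^\alpha\mathcal L^\beta u(t)\|_{\mathcal H}\lesssim e^{-\left(\frac b2-\sqrt{\frac{b^2}{4}-\lambda_0-m}\right)t}\big(\|u_0\|_{H^{\alpha+2\beta}_{\mathcal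 L}}+\|u_1\|_{H^{\alpha-1+2\beta}_{\mathcal L}}\big).$$
   Context: For $f$ in $\mathcal H$ (or an $\mathcal L$-distribution), $\widehat f(\xi):=(f,e_\xi)$ is the $\mathcal L$-Fourier coefficient. For $s\in\mathbb R$, the Sobolev space $H^s_{\mathcal L}$ consists of $\mathcal L$-distributions $f$ with $\mathcal L^{s/2}f\in\mathcal H$, with norm $\|f\|_{H^s_{\mathcal L}}:=\|\mathcal L^{s/2}f\|_{\mathcal H}=\big(\sum_{\xi}\lambda_\xi^{s}|\widehat f(\xi)|^2\big)^{1/2}$. The notation $A\lesssim B$ means $A\le CB$ with a constant $C$ independent of $t$ and the data $u_0,u_1$. *)

theory Defs
  imports "HOL-Analysis.Analysis"
begin

text \<open>We work in coordinates with respect to the orthonormal eigenbasis \<open>e_\<xi>\<close>, \<open>\<xi> \<in> \<nat>\<close>: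
  an element (or \<open>\<L>\<close>-distribution) \<open>f\<close> is represented by its sequence of
  \<open>\<L>\<close>-Fourier coefficients \<open>f \<xi> = (f, e_\<xi>)\<close>, and \<open>\<L>\<close> acts by \<open>f \<xi> \<mapsto> lam \<xi> * f \<xi>\<close>.\<close>

definition sob_in :: "(nat \<Rightarrow> real) \<Rightarrow> real \<Rightarrow> (nat \<Rightarrow> complex) \<Rightarrow> bool" where
  "sob_in lam s f \<longleftrightarrow> summable (\<lambda>\<xi>. lam \<xi> powr s * (cmod (f \<xi>))\<^sup>2)"

definition sob_norm :: "(nat \<Rightarrow> real) \<Rightarrow> real \<Rightarrow> (nat \<Rightarrow> complex) \<Rightarrow> real" where
  "sob_norm lam s f = sqrt (\<Sum>\<xi>. lam \<xi> powr s * (cmod (f \<xi>))\<^sup>2)"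

definition in_H :: "(nat \<Rightarrow> complex) \<Rightarrow> bool" where
  "in_H f \<longleftrightarrow> summable (\<lambda>\<xi>. (cmod (f \<xi>))\<^sup>2)"

definition H_norm :: "(nat \<Rightarrow> complex) \<Rightarrow> real" where
  "H_norm f = sqrt (\<Sum>\<xi>. (cmod (f \<xi>))\<^sup>2)"

definition tderiv :: "nat \<Rightarrow> (real \<Rightarrow> complex) \<Rightarrow> real \<Rightarrow> complex" where
  "tderiv k f = ((\<lambda>g t. vector_derivative g (at t)) ^^ k) f"

text \<open>\<open>u t \<xi>\<close> is the \<open>\<xi>\<close>-th Fourier coefficient of \<open>u(t)\<close>. \<open>u\<close> solves
  \<open>u'' + \<L> u + b u' + m u = 0\<close> for \<open>t > 0\<close>, \<open>u(0) = u0\<close>, \<open>u'(0) = u1\<close>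
  (the derivative at \<open>0\<close> is the right derivative).\<close>
definition is_solution ::
  "(nat \<Rightarrow> real) \<Rightarrow> real \<Rightarrow> real \<Rightarrow> (nat \<Rightarrow> complex) \<Rightarrow> (nat \<Rightarrow> complex)
     \<Rightarrow> (real \<Rightarrow> nat \<Rightarrow> complex) \<Rightarrow> bool" where
  "is_solution lam b m u0 u1 u \<longleftrightarrow>
     (\<forall>\<xi>. u 0 \<xi> = u0 \<xi> \<and>
          ((\<lambda>s. u s \<xi>) has_vector_derivative u1 \<xi>) (at 0 within {0..}) \<and>
          (\<exists>ud udd. \<forall>t>0.
              ((\<lambda>s. u s \<xi>) has_vector_derivative ud t) (at t) \<and>
              (ud has_vector_derivative udd t) (at t) \<and>
              udd t + of_real (lam \<xi>) * u t \<xi> + of_real b * ud t + of_real m * u t \<xi> = 0))"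

end

theory Submission
  imports Defs
begin

lemma exp_vd:
  "((\<lambda>t::real. exp (r * complex_of_real t)) has_vector_derivative (r * exp (r * complex_of_real t))) (at t within S)"
proof -
  have "((\<lambda>z. exp (r * z)) has_field_derivative (r * exp (r * complex_of_real t))) (at (complex_of_real t))"
    by (auto intro!: derivative_eq_intros)
  from has_vector_derivative_real_field[OF this] show ?thesis .
qed
lemma ofreal_vd:
  "((\<lambda>t::real. complex_of_real t) has_vector_derivative 1) (at t within S)"
  using has_vector_derivative_of_real[of "\<lambda>x. x" 1] by (auto intro!: derivative_eq_intros)

definition Gf :: "complex \<Rightarrow> real \<Rightarrow> complex" where
  "Gf s t = (if s = 0 then complex_of_real t else (exp ((- 2 * s) * complex_of_real t) - 1)/(- 2 * s))"

lemma Gf_vd: "(Gf s has_vector_derivative exp ((- 2 * s) * complex_of_real t)) (at t within S)"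
proof (cases "s = 0")
  case True
  then show ?thesis unfolding Gf_def using ofreal_vd by simp
next
  case False
  have e: "((\<lambda>t. exp ((- 2 * s) * complex_of_real t)) has_vector_derivative ((- 2 * s) * exp ((- 2 * s) * complex_of_real t))) (at t within S)"
    by (rule exp_vd)
  have "((\<lambda>t. (exp ((- 2 * s) * complex_of_real t) - 1)/(- 2 * s)) has_vector_derivative
        ((- 2 * s) * exp ((- 2 * s) * complex_of_real t) - 0)/(- 2 * s)) (at t within S)"
    by (rule has_vector_derivative_divide[OF has_vector_derivative_diff[OF e has_vector_derivative_const]])
  then show ?thesis using False unfolding Gf_def by simp
qed

lemma Gf_0[simp]: "Gf s 0 = 0" by (simp add: Gf_def)

definition msol :: "real \<Rightarrow> real \<Rightarrow> real \<Rightarrow> (real \<Rightarrow> complex) \<Rightarrow> complex \<Rightarrow> complex \<Rightarrow> bool" where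
 "msol b m L f u0 u1 \<longleftrightarrow> f 0 = u0 \<and> (f has_vector_derivative u1) (at 0 within {0..}) \<and>
    (\<exists>ud udd. \<forall>t>0. (f has_vector_derivative ud t) (at t) \<and> (ud has_vector_derivative udd t) (at t) \<and>
       udd t + of_real L * f t + of_real b * ud t + of_real m * f t = 0)"

lemma rep:
  fixes s :: complex
  assumes ms: "msol b m L f u0 u1" and s2: "s^2 = of_real (b^2/4 - (L+m))"
  defines "r1 \<equiv> - of_real b/2 + s"
  shows "\<forall>t\<ge>0. f t = (u0 + (u1 - r1*u0) * Gf s t) * exp (r1 * of_real t)"
proof -
  define r2 where "r2 = - of_real b/2 - s"
  obtain ud udd where H: "\<And>t. t>0 \<Longrightarrow> (f has_vector_derivative ud t) (at t) \<and> (ud has_vector_derivative udd t) (at t) \<and>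
       udd t + of_real L * f t + of_real b * ud t + of_real m * f t = 0"
    using ms unfolding msol_def by blast
  have f0: "f 0 = u0" and fd0: "(f has_vector_derivative u1) (at 0 within {0..})"
    using ms unfolding msol_def by auto
  have rsum: "r1 + r2 = - of_real b" unfolding r1_def r2_def by simp
  have rprod: "r1 * r2 = of_real (L + m)"
  proof -
    have "r1 * r2 = (of_real b/2)^2 - s^2" unfolding r1_def r2_def by (simp add: algebra_simps power2_eq_square)
    also have "\<dots> = of_real (L+m)" using s2 by (simp add: power_divide)
    finally show ?thesis .
  qed
  define z where "z t = ud t - r1 * f t" for t
  have zd: "(z has_vector_derivative r2 * z t) (at t)" if "t > 0" for t
  proof -
    have "(z has_vector_derivative udd t - r1 * ud t) (at t)"
      unfolding z_def using H[OF that] by (auto intro!: derivative_eq_intros)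
    moreover have "udd t - r1 * ud t = r2 * z t"
    proof -
      have e0: "udd t + of_real L * f t + of_real b * ud t + of_real m * f t = 0" using H[OF that] by blast
      have "udd t = udd t - (udd t + of_real L * f t + of_real b * ud t + of_real m * f t)" using e0 by simp
      also have "\<dots> = - of_real (L+m) * f t - of_real b * ud t" by (simp add: algebra_simps)
      finally have "udd t = - of_real (L+m) * f t - of_real b * ud t" .
      moreover have "complex_of_real b = -(r1+r2)" using rsum by simp
      ultimately show ?thesis unfolding z_def rprod[symmetric] by (simp add: algebra_simps)
    qed
    ultimately show ?thesis by simp
  qed
  define q where "q t = z t * exp ((- r2) * complex_of_real t)" for t
  have qd: "(q has_derivative (\<lambda>h. 0)) (at t within {0<..})" if "t > 0" for t
  proof -
    have "(q has_vector_derivative z t * ((- r2) * exp ((- r2) * complex_of_real t)) + r2 * z t * exp ((- r2) * complex_of_real t)) (at t)"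
      unfolding q_def by (rule has_vector_derivative_mult[OF zd[OF that] exp_vd])
    then have "(q has_vector_derivative 0) (at t)" by (simp add: algebra_simps)
    then show ?thesis unfolding has_vector_derivative_def by (simp add: has_derivative_at_withinI)
  qed
  have qc: "q t = q 1" if "t > 0" for t
  proof (rule has_derivative_zero_unique_strong_convex[of "{0<..}" "{}" q 1 "q 1" t])
    show "continuous_on {0<..} q"
      using qd has_derivative_continuous by (metis continuous_on_eq_continuous_within greaterThan_iff)
  qed (use qd that in auto)
  define c where "c = q 1"
  have zc: "z t = c * exp (r2 * complex_of_real t)" if "t > 0" for t
  proof -
    have cq: "c = q t" using qc[OF that] c_def by simp
    have "c * exp (r2 * complex_of_real t) = z t * (exp ((- r2) * complex_of_real t) * exp (r2 * complex_of_real t))"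
      unfolding cq q_def by (simp add: algebra_simps)
    also have "\<dots> = z t" by (simp add: exp_add[symmetric])
    finally show ?thesis by simp
  qed
  define h where "h t = f t * exp ((- r1) * complex_of_real t) - c * Gf s t" for t
  have hd: "(h has_derivative (\<lambda>h. 0)) (at t within {0..})" if "t > 0" for t
  proof -
    have "(h has_vector_derivative (ud t * exp ((- r1) * complex_of_real t) + f t * ((- r1) * exp ((- r1) * complex_of_real t))) - c * exp ((- 2 * s) * complex_of_real t)) (at t)"
      unfolding h_def
      by (rule has_vector_derivative_diff[OF has_vector_derivative_eq_rhs[OF has_vector_derivative_mult[OF conjunct1[OF H[OF that]] exp_vd]] has_vector_derivative_mult_right[OF Gf_vd]]) (simp add: algebra_simps)
    moreover have "ud t * exp ((- r1) * complex_of_real t) + f t * ((- r1) * exp ((- r1) * complex_of_real t)) = z t * exp ((- r1) * complex_of_real t)"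
      unfolding z_def by (simp add: algebra_simps)
    moreover have "z t * exp ((- r1) * complex_of_real t) = c * exp ((- 2 * s) * complex_of_real t)"
    proof -
      have "z t * exp ((- r1) * complex_of_real t) = c * exp (r2 * complex_of_real t + (- r1) * complex_of_real t)"
        unfolding zc[OF that] exp_add by simp
      also have "r2 * complex_of_real t + (- r1) * complex_of_real t = (- 2 * s) * complex_of_real t"
        unfolding r1_def r2_def by (simp add: algebra_simps)
      finally show ?thesis .
    qed
    ultimately have "(h has_vector_derivative 0) (at t)" by simp
    then show ?thesis unfolding has_vector_derivative_def by (simp add: has_derivative_at_withinI)
  qed
  have hcont: "continuous_on {0..} h"
  proof -
    have "continuous (at t within {0..}) h" if "t \<ge> 0" for t
    proof (cases "t = 0")
      case True
      have "continuous (at 0 within {0..}) f" using fd0 by (rule has_vector_derivative_continuous)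
      moreover have "continuous (at 0 within {0..}) (\<lambda>t. exp ((- r1) * complex_of_real t))"
        using exp_vd has_vector_derivative_continuous by blast
      moreover have "continuous (at 0 within {0..}) (Gf s)"
        using Gf_vd has_vector_derivative_continuous by blast
      ultimately show ?thesis unfolding h_def True by (intro continuous_intros) auto
    next
      case False
      then show ?thesis using hd[of t] that has_derivative_continuous by auto
    qed
    then show ?thesis by (simp add: continuous_on_eq_continuous_within)
  qed
  have hc: "h t = u0" if "t \<ge> 0" for t
    by (rule has_derivative_zero_unique_strong_convex[of "{0..}" "{0}" h 0 u0 t])
       (use hcont hd that f0 in \<open>auto simp: h_def\<close>)
  have fF: "f t = (u0 + c * Gf s t) * exp (r1 * of_real t)" if "t \<ge> 0" for t
  proof -
    have "f t * exp ((- r1) * complex_of_real t) = u0 + c * Gf s t" using hc[OF that] unfolding h_def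
      by (simp add: algebra_simps)
    then have "f t * (exp ((- r1) * complex_of_real t) * exp (r1 * of_real t)) = (u0 + c * Gf s t) * exp (r1 * of_real t)"
      by (metis mult.assoc)
    then show ?thesis by (simp add: exp_add[symmetric])
  qed
  have d1: "((\<lambda>t. (u0 + c * Gf s t) * exp (r1 * of_real t)) has_vector_derivative c + r1 * u0) (at 0 within {0..1})"
    by (rule has_vector_derivative_eq_rhs[OF has_vector_derivative_mult[OF has_vector_derivative_add[OF has_vector_derivative_const has_vector_derivative_mult_right[OF Gf_vd]] exp_vd]]) simp
  have d2: "((\<lambda>t. (u0 + c * Gf s t) * exp (r1 * of_real t)) has_vector_derivative u1) (at 0 within {0..1})"
    by (rule has_vector_derivative_transform[of 0 "{0..1}" _ f]) 
       (use fF has_vector_derivative_within_subset[OF fd0, of "{0..1}"] in auto)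
  have "c + r1 * u0 = u1"
    using vector_derivative_unique_within_closed_interval[of 0 1 0 _ "c + r1 * u0" u1] d1 d2 by simp
  then have "c = u1 - r1 * u0" by (simp add: algebra_simps)
  then show ?thesis using fF by auto
qed

lemma tderiv_Suc: "tderiv (Suc k) f = tderiv k (\<lambda>t. vector_derivative f (at t))"
  unfolding tderiv_def funpow_Suc_right by simp

lemma tderiv_0[simp]: "tderiv 0 f = f"
  unfolding tderiv_def by simp

lemma vd_cong:
  assumes "\<forall>t>0. f t = F t" "t > 0"
  shows "vector_derivative f (at t) = vector_derivative F (at t)"
proof -
  have "(f has_vector_derivative D) (at t) \<longleftrightarrow> (F has_vector_derivative D) (at t)" for D
  proof
    assume "(f has_vector_derivative D) (at t)"
    then show "(F has_vector_derivative D) (at t)"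
      by (rule has_vector_derivative_transform_within_open[of f D t "{0<..}" F]) (use assms in auto)
  next
    assume "(F has_vector_derivative D) (at t)"
    then show "(f has_vector_derivative D) (at t)"
      by (rule has_vector_derivative_transform_within_open[of F D t "{0<..}" f]) (use assms in auto)
  qed
  then show ?thesis unfolding vector_derivative_def by simp
qed

lemma tderiv_cong:
  assumes "\<forall>t>0. f t = F t" "t > 0"
  shows "tderiv k f t = tderiv k F t"
  using assms
proof (induction k arbitrary: f F)
  case 0
  then show ?case by simp
next
  case (Suc k)
  have "\<forall>t>0. vector_derivative f (at t) = vector_derivative F (at t)"
    using vd_cong[OF Suc.prems(1)] by blast
  then show ?case unfolding tderiv_Suc by (rule Suc.IH[OF _ Suc.prems(2)])
qed
lemma tderiv_exp2:
  "tderiv k (\<lambda>t. A * exp (r1 * complex_of_real t) + B * exp (r2 * complex_of_real t)) t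
     = A * r1 ^ k * exp (r1 * complex_of_real t) + B * r2 ^ k * exp (r2 * complex_of_real t)"
proof (induction k arbitrary: A B)
  case 0
  then show ?case by simp
next
  case (Suc k)
  have dv: "(\<lambda>t. vector_derivative (\<lambda>t. A * exp (r1 * complex_of_real t) + B * exp (r2 * complex_of_real t)) (at t))
      = (\<lambda>t. (A * r1) * exp (r1 * complex_of_real t) + (B * r2) * exp (r2 * complex_of_real t))"
  proof
    fix t
    have "((\<lambda>t. A * exp (r1 * complex_of_real t) + B * exp (r2 * complex_of_real t)) has_vector_derivative
        (A * (r1 * exp (r1 * complex_of_real t)) + B * (r2 * exp (r2 * complex_of_real t)))) (at t)"
      by (intro has_vector_derivative_add has_vector_derivative_mult_right exp_vd)
    then show "vector_derivative (\<lambda>t. A * exp (r1 * complex_of_real t) + B * exp (r2 * complex_of_real t)) (at t)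
        = (A * r1) * exp (r1 * complex_of_real t) + (B * r2) * exp (r2 * complex_of_real t)"
      by (simp add: vector_derivative_at algebra_simps)
  qed
  have "tderiv (Suc k) (\<lambda>t. A * exp (r1 * complex_of_real t) + B * exp (r2 * complex_of_real t)) t
     = tderiv k (\<lambda>t. (A * r1) * exp (r1 * complex_of_real t) + (B * r2) * exp (r2 * complex_of_real t)) t"
    unfolding tderiv_Suc dv ..
  also have "\<dots> = (A * r1) * r1 ^ k * exp (r1 * complex_of_real t) + (B * r2) * r2 ^ k * exp (r2 * complex_of_real t)"
    by (rule Suc.IH)
  finally show ?case by (simp add: algebra_simps)
qed

lemma tderiv_texp:
  "tderiv k (\<lambda>t. (P + Q * complex_of_real t) * exp (r * complex_of_real t)) t
     = (P * r ^ k + of_nat k * Q * r ^ (k - 1) + Q * r ^ k * complex_of_real t) * exp (r * complex_of_real t)"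
proof (induction k arbitrary: P Q)
  case 0
  then show ?case by simp
next
  case (Suc k)
  have dv: "(\<lambda>t. vector_derivative (\<lambda>t. (P + Q * complex_of_real t) * exp (r * complex_of_real t)) (at t))
      = (\<lambda>t. ((P * r + Q) + (Q * r) * complex_of_real t) * exp (r * complex_of_real t))"
  proof
    fix t
    have "((\<lambda>t. (P + Q * complex_of_real t) * exp (r * complex_of_real t)) has_vector_derivative
        ((P + Q * complex_of_real t) * (r * exp (r * complex_of_real t)) + (0 + Q * 1) * exp (r * complex_of_real t))) (at t)"
      by (intro has_vector_derivative_mult has_vector_derivative_add has_vector_derivative_mult_right exp_vd
          ofreal_vd has_vector_derivative_const)
    then show "vector_derivative (\<lambda>t. (P + Q * complex_of_real t) * exp (r * complex_of_real t)) (at t)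
        = ((P * r + Q) + (Q * r) * complex_of_real t) * exp (r * complex_of_real t)"
      by (simp add: vector_derivative_at algebra_simps)
  qed
  have kk: "of_nat k * (Q * r) * r ^ (k - 1) = of_nat k * Q * r ^ k"
    by (cases k) auto
  have "tderiv (Suc k) (\<lambda>t. (P + Q * complex_of_real t) * exp (r * complex_of_real t)) t
     = tderiv k (\<lambda>t. ((P * r + Q) + (Q * r) * complex_of_real t) * exp (r * complex_of_real t)) t"
    unfolding tderiv_Suc dv ..
  also have "\<dots> = ((P * r + Q) * r ^ k + of_nat k * (Q * r) * r ^ (k - 1) + (Q * r) * r ^ k * complex_of_real t) * exp (r * complex_of_real t)"
    by (rule Suc.IH)
  finally show ?case unfolding kk by (simp add: algebra_simps)
qed


lemma tder_dist:
  fixes s :: complex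
  assumes ms: "msol b m L f u0 u1" and s2: "s^2 = of_real (b^2/4 - (L+m))" and s0: "s \<noteq> 0" and t: "t > 0"
  defines "r1 \<equiv> - of_real b/2 + s" and "r2 \<equiv> - of_real b/2 - s"
  defines "Bc \<equiv> (u1 - r1 * u0) / (- 2 * s)"
  shows "tderiv k f t = (u0 - Bc) * r1 ^ k * exp (r1 * complex_of_real t) + Bc * r2 ^ k * exp (r2 * complex_of_real t)"
proof -
  have R: "\<forall>t\<ge>0. f t = (u0 + (u1 - r1*u0) * Gf s t) * exp (r1 * of_real t)"
    using rep[OF ms s2] unfolding r1_def .
  have "\<forall>t>0. f t = (u0 - Bc) * exp (r1 * complex_of_real t) + Bc * exp (r2 * complex_of_real t)"
  proof (intro allI impI)
    fix t :: real assume "t > 0"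
    have e: "exp ((- 2 * s) * complex_of_real t) * exp (r1 * complex_of_real t) = exp (r2 * complex_of_real t)"
    proof -
      have ee: "(- 2 * s) * complex_of_real t + r1 * complex_of_real t = r2 * complex_of_real t"
        unfolding r1_def r2_def by (simp add: algebra_simps)
      show ?thesis by (simp only: exp_add[symmetric] ee)
    qed
    have "f t = (u0 + (u1 - r1*u0) * Gf s t) * exp (r1 * of_real t)" using R \<open>t > 0\<close> by simp
    also have "\<dots> = u0 * exp (r1 * of_real t) + Bc * (exp ((- 2 * s) * complex_of_real t) * exp (r1 * complex_of_real t) - exp (r1 * of_real t))"
    proof -
      have cg: "(u1 - r1*u0) * Gf s t = Bc * (exp ((- 2 * s) * complex_of_real t) - 1)"
        unfolding Gf_def Bc_def using s0 by simp
      show ?thesis unfolding cg by (simp add: algebra_simps)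
    qed
    also have "\<dots> = (u0 - Bc) * exp (r1 * complex_of_real t) + Bc * exp (r2 * complex_of_real t)"
      unfolding e by (simp add: algebra_simps)
    finally show "f t = (u0 - Bc) * exp (r1 * complex_of_real t) + Bc * exp (r2 * complex_of_real t)" .
  qed
  then have "tderiv k f t = tderiv k (\<lambda>t. (u0 - Bc) * exp (r1 * complex_of_real t) + Bc * exp (r2 * complex_of_real t)) t"
    by (rule tderiv_cong[OF _ t])
  then show ?thesis by (simp only: tderiv_exp2)
qed

lemma tder_eq:
  assumes ms: "msol b m L f u0 u1" and s2: "L + m = b^2/4" and t: "t > 0"
  defines "r \<equiv> - complex_of_real b/2" and "c \<equiv> u1 - (- complex_of_real b/2) * u0"
  shows "tderiv k f t = (u0 * r ^ k + of_nat k * c * r ^ (k - 1) + c * r ^ k * complex_of_real t) * exp (r * complex_of_real t)"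
proof -
  have "b^2/4 - (L+m) = 0" using s2 by simp
  then have "(0::complex)^2 = of_real (b^2/4 - (L+m))" by simp
  from rep[OF ms this] have R: "\<forall>t\<ge>0. f t = (u0 + c * complex_of_real t) * exp (r * of_real t)"
    unfolding r_def c_def Gf_def by simp
  then have "tderiv k f t = tderiv k (\<lambda>t. (u0 + c * complex_of_real t) * exp (r * of_real t)) t"
    using R by (intro tderiv_cong t) auto
  then show ?thesis using tderiv_texp by simp
qed

lemma norm_cexp: "cmod (exp (r * complex_of_real t)) = exp (Re r * t)"
  by simp

lemma bound_dist:
  fixes s :: complex
  assumes ms: "msol b m L f u0 u1" and s2: "s^2 = of_real (b^2/4 - (L+m))" and s0: "s \<noteq> 0" and t: "t > 0"
    and Res: "Re s \<ge> 0"
  defines "r1 \<equiv> - of_real b/2 + s" and "r2 \<equiv> - of_real b/2 - s"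
  defines "Bc \<equiv> (u1 - r1 * u0) / (- 2 * s)"
  shows "cmod (tderiv k f t) \<le> (cmod (u0 - Bc) * cmod r1 ^ k + cmod Bc * cmod r2 ^ k) * exp (Re r1 * t)"
proof -
  have "cmod (tderiv k f t) \<le> cmod ((u0 - Bc) * r1 ^ k * exp (r1 * complex_of_real t)) + cmod (Bc * r2 ^ k * exp (r2 * complex_of_real t))"
    unfolding tder_dist[OF ms s2 s0 t] r1_def r2_def Bc_def by (rule norm_triangle_ineq)
  also have "\<dots> = cmod (u0 - Bc) * cmod r1 ^ k * exp (Re r1 * t) + cmod Bc * cmod r2 ^ k * exp (Re r2 * t)"
    by (simp add: norm_mult norm_power norm_cexp)
  also have "\<dots> \<le> cmod (u0 - Bc) * cmod r1 ^ k * exp (Re r1 * t) + cmod Bc * cmod r2 ^ k * exp (Re r1 * t)"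
  proof -
    have "Re r2 * t \<le> Re r1 * t" unfolding r1_def r2_def using Res t by (simp add: mult_right_mono)
    then show ?thesis by (intro add_left_mono mult_left_mono) auto
  qed
  finally show ?thesis by (simp add: algebra_simps)
qed

lemma bound_eq:
  assumes ms: "msol b m L f u0 u1" and s2: "L + m = b^2/4" and t: "t > 0"
  defines "r \<equiv> - complex_of_real b/2" and "c \<equiv> u1 - (- complex_of_real b/2) * u0"
  shows "cmod (tderiv k f t) \<le> (cmod u0 * cmod r ^ k + real k * cmod c * cmod r ^ (k - 1) + cmod c * cmod r ^ k * t) * exp (- b / 2 * t)"
proof -
  have "cmod (tderiv k f t) = cmod (u0 * r ^ k + of_nat k * c * r ^ (k - 1) + c * r ^ k * complex_of_real t) * exp (- b / 2 * t)"
    unfolding tder_eq[OF ms s2 t] r_def c_def norm_mult norm_cexp by simp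
  also have "\<dots> \<le> (cmod u0 * cmod r ^ k + real k * cmod c * cmod r ^ (k - 1) + cmod c * cmod r ^ k * t) * exp (- b / 2 * t)"
  proof (rule mult_right_mono)
    show "cmod (u0 * r ^ k + of_nat k * c * r ^ (k - 1) + c * r ^ k * complex_of_real t) \<le> cmod u0 * cmod r ^ k + real k * cmod c * cmod r ^ (k - 1) + cmod c * cmod r ^ k * t"
    proof -
      have "cmod (u0 * r ^ k + of_nat k * c * r ^ (k - 1) + c * r ^ k * complex_of_real t)
          \<le> cmod (u0 * r ^ k) + cmod (of_nat k * c * r ^ (k - 1)) + cmod (c * r ^ k * complex_of_real t)"
        by (rule order.trans[OF norm_triangle_ineq add_right_mono[OF norm_triangle_ineq]])
      also have "\<dots> = cmod u0 * cmod r ^ k + real k * cmod c * cmod r ^ (k - 1) + cmod c * cmod r ^ k * t"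
        using t by (simp add: norm_mult norm_power)
      finally show ?thesis .
    qed
  qed auto
  finally show ?thesis .
qed

definition sL :: "real \<Rightarrow> real \<Rightarrow> real \<Rightarrow> complex" where
  "sL b m L = (if b^2/4 - (L+m) \<ge> 0 then complex_of_real (sqrt (b^2/4 - (L+m)))
               else \<i> * complex_of_real (sqrt (- (b^2/4 - (L+m)))))"

lemma sL_sq: "(sL b m L)^2 = complex_of_real (b^2/4 - (L+m))"
proof (cases "b^2/4 - (L+m) \<ge> 0")
  case True
  then show ?thesis unfolding sL_def by (simp add: power2_eq_square[symmetric] del: of_real_power flip: of_real_power)
next
  case False
  have sq: "(\<i> * complex_of_real w)^2 = - complex_of_real (w^2)" for w
    by (simp add: power_mult_distrib)
  have "(\<i> * complex_of_real (sqrt (- (b^2/4 - (L+m)))))^2 = - complex_of_real ((sqrt (- (b^2/4 - (L+m))))^2)"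
    by (rule sq)
  also have "\<dots> = complex_of_real (b^2/4 - (L+m))"
  proof -
    have q: "(sqrt (- (b^2/4 - (L+m))))^2 = - (b^2/4 - (L+m))" using False by simp
    show ?thesis by (simp only: q of_real_minus minus_minus)
  qed
  finally show ?thesis unfolding sL_def using False by (simp only: if_False) 
qed

lemma sL_Re: "Re (sL b m L) \<ge> 0"
  unfolding sL_def by auto

lemma sL_0: "sL b m L = 0 \<longleftrightarrow> L + m = b^2/4"
  unfolding sL_def by auto

lemma sL_neg: "b^2/4 - (L+m) < 0 \<Longrightarrow> sL b m L = \<i> * complex_of_real (sqrt (L + m - b^2/4))"
  unfolding sL_def by auto

lemma sL_pos: "b^2/4 - (L+m) \<ge> 0 \<Longrightarrow> sL b m L = complex_of_real (sqrt (b^2/4 - (L+m)))"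
  unfolding sL_def by auto

lemma low_dist:
  fixes g :: "real \<Rightarrow> real" and b m L :: real
  defines "r1 \<equiv> - complex_of_real b/2 + sL b m L"
  assumes ne: "L + m \<noteq> b^2/4" and H1: "\<forall>t>0. exp (Re r1 * t) \<le> g t"
  shows "\<exists>C. \<forall>f u0 u1 t. msol b m L f u0 u1 \<and> t > 0 \<longrightarrow> cmod (tderiv k f t) \<le> C * g t * (cmod u0 + cmod u1)"
proof -
  define s where "s = sL b m L"
  have s0: "s \<noteq> 0" unfolding s_def using ne by (simp only: sL_0 not_False_eq_True)
  have s2: "s^2 = complex_of_real (b^2/4 - (L+m))" unfolding s_def by (rule sL_sq)
  have Res: "Re s \<ge> 0" unfolding s_def by (rule sL_Re)
  define r2 where "r2 = - complex_of_real b/2 - s"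
  have r1s: "r1 = - complex_of_real b/2 + s" unfolding r1_def s_def ..
  define K1 where "K1 = (1 + cmod r1) / cmod (- 2 * s)"
  have K1: "K1 \<ge> 0" unfolding K1_def by simp
  define C where "C = (1 + K1) * cmod r1 ^ k + K1 * cmod r2 ^ k"
  show ?thesis
  proof (intro exI allI impI)
    fix f u0 u1 t assume a: "msol b m L f u0 u1 \<and> (t::real) > 0"
    define Bc where "Bc = (u1 - r1 * u0) / (- 2 * s)"
    have B: "cmod (tderiv k f t) \<le> (cmod (u0 - Bc) * cmod r1 ^ k + cmod Bc * cmod r2 ^ k) * exp (Re r1 * t)"
      unfolding Bc_def r1s r2_def using a by (intro bound_dist[OF _ s2 s0 _ Res]) auto
    have cB: "cmod Bc \<le> K1 * (cmod u0 + cmod u1)"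
    proof -
      have "cmod (u1 - r1 * u0) \<le> cmod u1 + cmod r1 * cmod u0"
        using norm_triangle_ineq4[of u1 "r1 * u0"] by (simp add: norm_mult)
      also have "\<dots> \<le> (1 + cmod r1) * (cmod u0 + cmod u1)"
        by (simp add: algebra_simps)
      finally have "cmod (u1 - r1 * u0) / cmod (- 2 * s) \<le> (1 + cmod r1) * (cmod u0 + cmod u1) / cmod (- 2 * s)"
        by (rule divide_right_mono) simp
      then show ?thesis unfolding Bc_def K1_def by (simp add: norm_divide)
    qed
    have cA: "cmod (u0 - Bc) \<le> (1 + K1) * (cmod u0 + cmod u1)"
    proof -
      have "cmod (u0 - Bc) \<le> cmod u0 + cmod Bc" by (rule norm_triangle_ineq4)
      also have "\<dots> \<le> (cmod u0 + cmod u1) + K1 * (cmod u0 + cmod u1)" using cB norm_ge_zero[of u1] by linarith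
      finally show ?thesis by (simp add: algebra_simps)
    qed
    have X: "cmod (u0 - Bc) * cmod r1 ^ k + cmod Bc * cmod r2 ^ k \<le> C * (cmod u0 + cmod u1)"
    proof -
      have "cmod (u0 - Bc) * cmod r1 ^ k \<le> (1 + K1) * (cmod u0 + cmod u1) * cmod r1 ^ k"
        using cA by (rule mult_right_mono) simp
      moreover have "cmod Bc * cmod r2 ^ k \<le> K1 * (cmod u0 + cmod u1) * cmod r2 ^ k"
        using cB by (rule mult_right_mono) simp
      ultimately show ?thesis unfolding C_def by (simp add: algebra_simps)
    qed
    have G: "exp (Re r1 * t) \<le> g t" using H1 a by blast
    have C0: "C * (cmod u0 + cmod u1) \<ge> 0" unfolding C_def using K1 by simp
    have "cmod (tderiv k f t) \<le> (C * (cmod u0 + cmod u1)) * g t"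
      by (rule order_trans[OF B mult_mono[OF X G C0 exp_ge_zero]])
    then show "cmod (tderiv k f t) \<le> C * g t * (cmod u0 + cmod u1)" by (simp add: algebra_simps)
  qed
qed

lemma low_eq:
  fixes g :: "real \<Rightarrow> real" and b m L c :: real
  assumes eq: "L + m = b^2/4" and c: "\<forall>t>0. (1 + t) * exp (- b/2 * t) \<le> c * g t"
  shows "\<exists>C. \<forall>f u0 u1 t. msol b m L f u0 u1 \<and> t > 0 \<longrightarrow> cmod (tderiv k f t) \<le> C * g t * (cmod u0 + cmod u1)"
proof -
  define r where "r = - complex_of_real b/2"
  define C where "C = (cmod r ^ k + (real k * cmod r ^ (k - 1) + cmod r ^ k) * (1 + cmod r)) * c"
  show ?thesis
  proof (intro exI allI impI)
    fix f u0 u1 t assume a: "msol b m L f u0 u1 \<and> (t::real) > 0"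
    define cc where "cc = u1 - (- complex_of_real b/2) * u0"
    have B: "cmod (tderiv k f t) \<le> (cmod u0 * cmod r ^ k + real k * cmod cc * cmod r ^ (k - 1) + cmod cc * cmod r ^ k * t) * exp (- b / 2 * t)"
      unfolding r_def cc_def using a by (intro bound_eq[OF _ eq]) auto
    have ccb: "cmod cc \<le> (1 + cmod r) * (cmod u0 + cmod u1)"
    proof -
      have "cmod cc \<le> cmod u1 + cmod r * cmod u0" unfolding cc_def r_def
        using norm_triangle_ineq4[of u1 "(- complex_of_real b/2) * u0"] by (simp add: norm_mult)
      also have "\<dots> \<le> (1 + cmod r) * (cmod u0 + cmod u1)"
        by (simp add: algebra_simps)
      finally show ?thesis .
    qed
    define U where "U = cmod u0 + cmod u1"
    define R where "R = cmod r"
    have R: "R \<ge> 0" unfolding R_def by simp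
    have U: "U \<ge> 0" "cmod u0 \<le> U" unfolding U_def by auto
    have ccU: "cmod cc \<le> (1 + R) * U" using ccb unfolding U_def R_def .
    have t0: "t \<ge> 0" using a by simp
    have "cmod u0 * R ^ k + real k * cmod cc * R ^ (k - 1) + cmod cc * R ^ k * t
        \<le> U * R ^ k + real k * ((1 + R) * U) * R ^ (k - 1) + ((1 + R) * U) * R ^ k * t"
    proof (intro add_mono)
      show "cmod u0 * R ^ k \<le> U * R ^ k" using U R by (simp add: mult_right_mono)
      show "real k * cmod cc * R ^ (k - 1) \<le> real k * ((1 + R) * U) * R ^ (k - 1)"
        using ccU R by (intro mult_right_mono mult_left_mono) auto
      show "cmod cc * R ^ k * t \<le> (1 + R) * U * R ^ k * t"
        using ccU R t0 by (intro mult_right_mono) auto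
    qed
    also have "\<dots> \<le> (R ^ k + (real k * R ^ (k - 1) + R ^ k) * (1 + R)) * U * (1 + t)"
    proof -
      have "0 \<le> U * R ^ k * t" using U R t0 by simp
      moreover have "0 \<le> real k * ((1 + R) * U) * R ^ (k - 1) * t" using U R t0 by simp
      moreover have "0 \<le> U * R ^ k" "0 \<le> R * (U * R ^ k)" using U R by simp_all
      ultimately show ?thesis by (simp add: algebra_simps)
    qed
    finally have X: "cmod u0 * R ^ k + real k * cmod cc * R ^ (k - 1) + cmod cc * R ^ k * t
        \<le> (R ^ k + (real k * R ^ (k - 1) + R ^ k) * (1 + R)) * U * (1 + t)" .
    have Y: "cmod (tderiv k f t) \<le> ((R ^ k + (real k * R ^ (k - 1) + R ^ k) * (1 + R)) * U * (1 + t)) * exp (- b / 2 * t)"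
      by (rule order_trans[OF B[folded R_def] mult_right_mono[OF X exp_ge_zero]])
    have "(R ^ k + (real k * R ^ (k - 1) + R ^ k) * (1 + R)) * U * ((1 + t) * exp (- b / 2 * t))
       \<le> (R ^ k + (real k * R ^ (k - 1) + R ^ k) * (1 + R)) * U * (c * g t)"
      using c a U R by (intro mult_left_mono) auto
    with Y show "cmod (tderiv k f t) \<le> C * g t * (cmod u0 + cmod u1)"
      unfolding C_def U_def[symmetric] R_def[symmetric] by (simp add: algebra_simps)
  qed
qed


lemma high_mode:
  fixes b m L :: real
  assumes b: "b > 0" and big: "3 * (L + m) \<ge> b^2" and ms: "msol b m L f u0 u1" and t: "t > 0"
  shows "cmod (tderiv k f t) \<le> (3 * cmod u0 * sqrt (L+m) ^ k + 2 * cmod u1 * sqrt (L+m) ^ k / sqrt (L+m)) * exp (- b/2 * t)"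
proof -
  define \<mu> where "\<mu> = L + m"
  have b2: "b^2 > 0" using b by simp
  have big': "b^2 \<le> 3 * \<mu>" using big unfolding \<mu>_def .
  have mu: "\<mu> > b^2/4" using big' b2 by linarith
  have mu0: "\<mu> > 0" using mu b2 by linarith
  define w where "w = sqrt (\<mu> - b^2/4)"
  have w0: "w > 0" unfolding w_def using mu by simp
  have w2: "w^2 = \<mu> - b^2/4" unfolding w_def using mu by simp
  define s where "s = sL b m L"
  have s: "s = \<i> * complex_of_real w" unfolding s_def w_def \<mu>_def using mu unfolding \<mu>_def
    by (intro sL_neg) simp
  have s0: "s \<noteq> 0" using w0 s by simp
  have s2: "s^2 = complex_of_real (b^2/4 - (L+m))" unfolding s_def by (rule sL_sq)
  have Res: "Re s \<ge> 0" unfolding s_def by (rule sL_Re)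
  define r1 where "r1 = - complex_of_real b/2 + s"
  define r2 where "r2 = - complex_of_real b/2 - s"
  have Re1: "Re r1 = - b/2" unfolding r1_def s by simp
  have n1: "cmod r1 = sqrt \<mu>"
  proof -
    have "cmod r1 = sqrt ((b/2)^2 + w^2)" unfolding r1_def s norm_complex_def by (simp add: power2_eq_square)
    also have "(b/2)^2 + w^2 = \<mu>" using w2 by (simp add: power_divide)
    finally show ?thesis .
  qed
  have n2: "cmod r2 = sqrt \<mu>"
  proof -
    have "cmod r2 = sqrt ((b/2)^2 + w^2)" unfolding r2_def s norm_complex_def by (simp add: power2_eq_square)
    also have "(b/2)^2 + w^2 = \<mu>" using w2 by (simp add: power_divide)
    finally show ?thesis .
  qed
  have n3: "cmod (- 2 * s) = 2 * w" unfolding s using w0 by (simp add: norm_mult)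
  have wsq: "2 * w \<ge> sqrt \<mu>"
  proof -
    have "(sqrt \<mu>)^2 \<le> (2 * w)^2" using w2 mu0 big' by (simp add: power_mult_distrib)
    from power2_le_imp_le[OF this] show ?thesis using w0 by simp
  qed
  have sq0: "sqrt \<mu> > 0" using mu0 by simp
  define Bc where "Bc = (u1 - r1 * u0) / (- 2 * s)"
  have B: "cmod (tderiv k f t) \<le> (cmod (u0 - Bc) * cmod r1 ^ k + cmod Bc * cmod r2 ^ k) * exp (Re r1 * t)"
    unfolding Bc_def r1_def r2_def using ms t by (intro bound_dist[OF _ s2 s0 _ Res]) auto
  have cB: "cmod Bc \<le> cmod u1 / sqrt \<mu> + cmod u0"
  proof -
    have "cmod (u1 - r1 * u0) \<le> cmod u1 + sqrt \<mu> * cmod u0"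
      using norm_triangle_ineq4[of u1 "r1 * u0"] n1 by (simp add: norm_mult)
    then have "cmod Bc \<le> (cmod u1 + sqrt \<mu> * cmod u0) / (2 * w)"
      unfolding Bc_def norm_divide n3 using w0 by (simp add: divide_right_mono)
    also have "\<dots> \<le> (cmod u1 + sqrt \<mu> * cmod u0) / sqrt \<mu>"
      using wsq sq0 w0 by (intro divide_left_mono) auto
    also have "\<dots> = cmod u1 / sqrt \<mu> + cmod u0" using sq0 by (simp add: field_simps)
    finally show ?thesis .
  qed
  have "cmod (u0 - Bc) + cmod Bc \<le> 3 * cmod u0 + 2 * cmod u1 / sqrt \<mu>"
    using norm_triangle_ineq4[of u0 Bc] cB by linarith
  then have "(cmod (u0 - Bc) + cmod Bc) * sqrt \<mu> ^ k \<le> (3 * cmod u0 + 2 * cmod u1 / sqrt \<mu>) * sqrt \<mu> ^ k"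
    by (rule mult_right_mono) (use mu0 in simp)
  then have "cmod (u0 - Bc) * cmod r1 ^ k + cmod Bc * cmod r2 ^ k \<le> 3 * cmod u0 * sqrt \<mu> ^ k + 2 * cmod u1 * sqrt \<mu> ^ k / sqrt \<mu>"
    unfolding n1 n2 by (simp add: algebra_simps)
  then show ?thesis
    using order_trans[OF B mult_right_mono[OF _ exp_ge_zero]] unfolding Re1 \<mu>_def by simp
qed

lemma sqrt_pow_powr: "x > 0 \<Longrightarrow> sqrt x ^ k = x powr (real k / 2)"
  by (simp add: powr_half_sqrt[symmetric] powr_power)

lemma sqrt_pow_div: "x > 0 \<Longrightarrow> sqrt x ^ k / sqrt x = x powr ((real k - 1) / 2)"
proof -
  assume x: "x > 0"
  have "sqrt x ^ k / sqrt x = x powr (real k / 2) / x powr (1/2)"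
    using x by (simp add: sqrt_pow_powr powr_half_sqrt)
  also have "\<dots> = x powr (real k / 2 - 1/2)" by (simp add: powr_diff)
  also have "real k / 2 - 1/2 = (real k - 1) / 2" by (simp add: field_simps)
  finally show ?thesis .
qed

lemma powr_compare:
  fixes L \<mu> e :: real
  assumes L: "L > 0" and lo: "L/2 \<le> \<mu>" and hi: "\<mu> \<le> 2 * L"
  shows "\<mu> powr e \<le> 2 powr \<bar>e\<bar> * L powr e"
proof (cases "e \<ge> 0")
  case True
  have "\<mu> powr e \<le> (2 * L) powr e" using True lo L hi by (intro powr_mono2) auto
  also have "\<dots> = 2 powr \<bar>e\<bar> * L powr e" using True by (simp add: powr_mult)
  finally show ?thesis .
next
  case False
  have "\<mu> powr e \<le> (L / 2) powr e" using False lo L by (intro powr_mono2') auto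
  also have "\<dots> = L powr e / 2 powr e" by (simp add: powr_divide)
  also have "\<dots> = 2 powr \<bar>e\<bar> * L powr e" using False by (simp add: powr_minus divide_inverse)
  finally show ?thesis .
qed

lemma high_W:
  fixes b m L :: real
  assumes b: "b > 0" and L1: "L \<ge> 2 * \<bar>m\<bar>" and L2: "L \<ge> b^2" and ms: "msol b m L f u0 u1" and t: "t > 0"
  shows "cmod (tderiv k f t) \<le> 3 * 2 powr ((real k + 1) / 2) * exp (- b/2 * t) *
           (L powr (real k / 2) * cmod u0 + L powr ((real k - 1) / 2) * cmod u1)"
proof -
  define \<mu> where "\<mu> = L + m"
  define M where "M = 2 powr ((real k + 1) / 2)"
  have b2: "b^2 > 0" using b by simp
  have L0: "L > 0" using L2 b2 by linarith
  have lo: "L/2 \<le> \<mu>" unfolding \<mu>_def using L1 by linarith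
  have hi: "\<mu> \<le> 2 * L" unfolding \<mu>_def using L1 by linarith
  have mu0: "\<mu> > 0" using lo L0 by linarith
  have big: "3 * \<mu> \<ge> b^2" using lo L2 b2 by linarith
  have hm: "cmod (tderiv k f t) \<le> (3 * cmod u0 * sqrt \<mu> ^ k + 2 * cmod u1 * sqrt \<mu> ^ k / sqrt \<mu>) * exp (- b/2 * t)"
    using high_mode[OF b _ ms t, of k] big unfolding \<mu>_def by simp
  have A: "sqrt \<mu> ^ k \<le> M * L powr (real k / 2)"
  proof -
    have "sqrt \<mu> ^ k = \<mu> powr (real k / 2)" using mu0 by (rule sqrt_pow_powr)
    also have "\<dots> \<le> 2 powr \<bar>real k / 2\<bar> * L powr (real k / 2)" by (rule powr_compare[OF L0 lo hi])
    also have "\<dots> \<le> M * L powr (real k / 2)" unfolding M_def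
      by (intro mult_right_mono powr_mono) auto
    finally show ?thesis .
  qed
  have B: "sqrt \<mu> ^ k / sqrt \<mu> \<le> M * L powr ((real k - 1) / 2)"
  proof -
    have "sqrt \<mu> ^ k / sqrt \<mu> = \<mu> powr ((real k - 1) / 2)" using mu0 by (rule sqrt_pow_div)
    also have "\<dots> \<le> 2 powr \<bar>(real k - 1) / 2\<bar> * L powr ((real k - 1) / 2)" by (rule powr_compare[OF L0 lo hi])
    also have "\<dots> \<le> M * L powr ((real k - 1) / 2)" unfolding M_def
      by (intro mult_right_mono powr_mono) auto
    finally show ?thesis .
  qed
  have "3 * cmod u0 * sqrt \<mu> ^ k + 2 * cmod u1 * sqrt \<mu> ^ k / sqrt \<mu>
      \<le> 3 * cmod u0 * (M * L powr (real k / 2)) + 2 * cmod u1 * (M * L powr ((real k - 1) / 2))"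
  proof (rule add_mono)
    show "3 * cmod u0 * sqrt \<mu> ^ k \<le> 3 * cmod u0 * (M * L powr (real k / 2))"
      using A by (intro mult_left_mono) auto
    have "2 * cmod u1 * sqrt \<mu> ^ k / sqrt \<mu> = 2 * cmod u1 * (sqrt \<mu> ^ k / sqrt \<mu>)" by simp
    also have "\<dots> \<le> 2 * cmod u1 * (M * L powr ((real k - 1) / 2))"
      using B by (intro mult_left_mono) auto
    finally show "2 * cmod u1 * sqrt \<mu> ^ k / sqrt \<mu> \<le> 2 * cmod u1 * (M * L powr ((real k - 1) / 2))" .
  qed
  also have "\<dots> \<le> 3 * M * (L powr (real k / 2) * cmod u0 + L powr ((real k - 1) / 2) * cmod u1)"
  proof -
    have "0 \<le> M * L powr ((real k - 1) / 2) * cmod u1" unfolding M_def by simp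
    then show ?thesis by (simp add: algebra_simps)
  qed
  finally have X: "3 * cmod u0 * sqrt \<mu> ^ k + 2 * cmod u1 * sqrt \<mu> ^ k / sqrt \<mu>
      \<le> 3 * M * (L powr (real k / 2) * cmod u0 + L powr ((real k - 1) / 2) * cmod u1)" .
  have "cmod (tderiv k f t) \<le> 3 * M * (L powr (real k / 2) * cmod u0 + L powr ((real k - 1) / 2) * cmod u1) * exp (- b/2 * t)"
    by (rule order_trans[OF hm mult_right_mono[OF X exp_ge_zero]])
  then show ?thesis unfolding M_def by (simp add: algebra_simps)
qed


lemma low_conv:
  fixes L :: real
  assumes L: "L > 0" and that: "x \<ge> 0" "y \<ge> 0"
  shows "x + y \<le> (L powr (- (real k / 2)) + L powr (- ((real k - 1) / 2))) * (L powr (real k / 2) * x + L powr ((real k - 1) / 2) * y)"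
proof -
  define p where "p = L powr (- (real k / 2))"
  define q where "q = L powr (- ((real k - 1) / 2))"
  define a where "a = L powr (real k / 2)"
  define a' where "a' = L powr ((real k - 1) / 2)"
  have pa: "p * a = 1" unfolding p_def a_def using L by (simp add: powr_add[symmetric])
  have qa: "q * a' = 1" unfolding q_def a'_def using L by (simp add: powr_add[symmetric])
  have nn: "p \<ge> 0" "q \<ge> 0" "a \<ge> 0" "a' \<ge> 0" unfolding p_def q_def a_def a'_def by auto
  have "(p + q) * (a * x + a' * y) = (p * a) * x + (q * a') * y + (p * a' * y + q * a * x)"
    by (simp add: algebra_simps)
  also have "\<dots> = x + y + (p * a' * y + q * a * x)" using pa qa by simp
  also have "\<dots> \<ge> x + y" using nn that by simp
  finally show ?thesis unfolding p_def q_def a_def a'_def by simp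
qed

lemma uniform_mode:
  fixes lam :: "nat \<Rightarrow> real" and b m :: real and g :: "real \<Rightarrow> real" and k :: nat
  assumes lam_pos: "\<forall>\<xi>. lam \<xi> > 0" and discrete: "\<forall>K. finite {\<xi>. lam \<xi> \<le> K}" and b: "b > 0"
    and g0: "\<forall>t>0. g t \<ge> 0" and gh: "\<forall>t>0. exp (- b/2 * t) \<le> g t"
    and low: "\<forall>\<xi>. \<exists>C. \<forall>f u0 u1 t. msol b m (lam \<xi>) f u0 u1 \<and> t > 0 \<longrightarrow> cmod (tderiv k f t) \<le> C * g t * (cmod u0 + cmod u1)"
  shows "\<exists>C\<ge>0. \<forall>\<xi> f u0 u1 t. msol b m (lam \<xi>) f u0 u1 \<and> t > 0 \<longrightarrow>
     cmod (tderiv k f t) \<le> C * g t * (lam \<xi> powr (real k / 2) * cmod u0 + lam \<xi> powr ((real k - 1) / 2) * cmod u1)"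
proof -
  obtain Cf where Cf: "\<And>\<xi> f u0 u1 t. msol b m (lam \<xi>) f u0 u1 \<Longrightarrow> t > 0 \<Longrightarrow> cmod (tderiv k f t) \<le> Cf \<xi> * g t * (cmod u0 + cmod u1)"
    using choice[OF low] by blast
  define K where "K = 2 * \<bar>m\<bar> + b^2"
  define S where "S = {\<xi>. lam \<xi> \<le> K}"
  have finS: "finite S" unfolding S_def using discrete by blast
  define Q where "Q \<xi> = lam \<xi> powr (- (real k / 2)) + lam \<xi> powr (- ((real k - 1) / 2))" for \<xi>
  define Clow where "Clow = (\<Sum>\<xi>\<in>S. \<bar>Cf \<xi>\<bar> * Q \<xi>)"
  define M where "M = 3 * 2 powr ((real k + 1) / 2)"
  have Q0: "Q \<xi> \<ge> 0" for \<xi> unfolding Q_def by simp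
  have Clow0: "Clow \<ge> 0" unfolding Clow_def using Q0 by (intro sum_nonneg) simp
  have M0: "M \<ge> 0" unfolding M_def by simp
  show ?thesis
  proof (intro exI[of _ "M + Clow"] conjI allI impI)
    show "M + Clow \<ge> 0" using M0 Clow0 by simp
    fix \<xi> f u0 u1 t assume a: "msol b m (lam \<xi>) f u0 u1 \<and> (t::real) > 0"
    define W where "W = lam \<xi> powr (real k / 2) * cmod u0 + lam \<xi> powr ((real k - 1) / 2) * cmod u1"
    have W0: "W \<ge> 0" unfolding W_def by simp
    have gt: "g t \<ge> 0" using g0 a by blast
    have "cmod (tderiv k f t) \<le> (M + Clow) * g t * W"
    proof (cases "\<xi> \<in> S")
      case True
      have "cmod (tderiv k f t) \<le> Cf \<xi> * g t * (cmod u0 + cmod u1)" using Cf a by blast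
      also have "\<dots> \<le> \<bar>Cf \<xi>\<bar> * g t * (cmod u0 + cmod u1)"
        using gt by (intro mult_right_mono) auto
      also have "\<dots> \<le> \<bar>Cf \<xi>\<bar> * g t * (Q \<xi> * W)"
        unfolding Q_def W_def using gt lam_pos
        by (intro mult_left_mono low_conv) auto
      also have "\<dots> = (\<bar>Cf \<xi>\<bar> * Q \<xi>) * g t * W" by (simp add: algebra_simps)
      also have "\<dots> \<le> Clow * g t * W"
        unfolding Clow_def using finS True Q0 gt W0
        by (intro mult_right_mono member_le_sum) auto
      also have "\<dots> \<le> (M + Clow) * g t * W"
        using M0 gt W0 by (intro mult_right_mono) auto
      finally show ?thesis .
    next
      case False
      then have lk: "lam \<xi> > K" unfolding S_def by simp
      have L1: "lam \<xi> \<ge> 2 * \<bar>m\<bar>" and L2: "lam \<xi> \<ge> b^2"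
        using lk zero_le_power2[of b] abs_ge_zero[of m] unfolding K_def by linarith+
      have "cmod (tderiv k f t) \<le> M * exp (- b/2 * t) * W"
        unfolding M_def W_def using high_W[OF b L1 L2, of f u0 u1 t k] a by blast
      also have "\<dots> \<le> M * g t * W"
        using gh a M0 W0 by (intro mult_right_mono mult_left_mono) auto
      also have "\<dots> \<le> (M + Clow) * g t * W"
        using Clow0 gt W0 by (intro mult_right_mono) auto
      finally show ?thesis .
    qed
    then show "cmod (tderiv k f t) \<le> (M + Clow) * g t * (lam \<xi> powr (real k / 2) * cmod u0 + lam \<xi> powr ((real k - 1) / 2) * cmod u1)"
      unfolding W_def .
  qed
qed

lemma sq_bound:
  fixes L B x y :: real
  assumes L: "L > 0" and B: "B \<ge> 0"
  shows "(L powr B * (L powr (real k / 2) * x + L powr ((real k - 1) / 2) * y))^2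
     \<le> 2 * (L powr (real k + 2 * B) * x^2 + L powr (real k - 1 + 2 * B) * y^2)"
proof -
  define X where "X = L powr B * L powr (real k / 2) * x"
  define Y where "Y = L powr B * L powr ((real k - 1) / 2) * y"
  have X2: "X^2 = L powr (real k + 2 * B) * x^2"
  proof -
    have "X^2 = (L powr (B + real k / 2))^2 * x^2" unfolding X_def by (simp add: powr_add power_mult_distrib)
    also have "(L powr (B + real k / 2))^2 = L powr (real k + 2 * B)"
    proof -
      have e: "of_nat 2 * (B + real k / 2) = real k + 2 * B" by (simp add: field_simps)
      have "(L powr (B + real k / 2))^2 = L powr (of_nat 2 * (B + real k / 2))" using L by (intro powr_power) simp
      then show ?thesis unfolding e .
    qed
    finally show ?thesis .
  qed
  have Y2: "Y^2 = L powr (real k - 1 + 2 * B) * y^2"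
  proof -
    have "Y^2 = (L powr (B + (real k - 1) / 2))^2 * y^2" unfolding Y_def by (simp add: powr_add power_mult_distrib)
    also have "(L powr (B + (real k - 1) / 2))^2 = L powr (real k - 1 + 2 * B)"
    proof -
      have e: "of_nat 2 * (B + (real k - 1) / 2) = real k - 1 + 2 * B" by (simp add: field_simps)
      have "(L powr (B + (real k - 1) / 2))^2 = L powr (of_nat 2 * (B + (real k - 1) / 2))" using L by (intro powr_power) simp
      then show ?thesis unfolding e .
    qed
    finally show ?thesis .
  qed
  have "(L powr B * (L powr (real k / 2) * x + L powr ((real k - 1) / 2) * y))^2 = (X + Y)^2"
    unfolding X_def Y_def by (simp add: algebra_simps)
  also have "\<dots> \<le> 2 * (X^2 + Y^2)"
    using sum_squares_ge_zero[of "X - Y" 0] by (simp add: power2_eq_square algebra_simps)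
  finally show ?thesis unfolding X2 Y2 .
qed


lemma sol_msol: "is_solution lam b m u0 u1 u \<Longrightarrow> msol b m (lam \<xi>) (\<lambda>s. u s \<xi>) (u0 \<xi>) (u1 \<xi>)"
  unfolding is_solution_def msol_def by blast

lemma assemble:
  fixes lam :: "nat \<Rightarrow> real" and b m \<beta> :: real and g :: "real \<Rightarrow> real" and \<alpha> :: nat
  assumes lam_pos: "\<forall>\<xi>. lam \<xi> > 0" and discrete: "\<forall>K. finite {\<xi>. lam \<xi> \<le> K}" and b: "b > 0"
    and beta: "\<beta> \<ge> 0"
    and g0: "\<forall>t>0. g t \<ge> 0" and gh: "\<forall>t>0. exp (- b/2 * t) \<le> g t"
    and low: "\<forall>\<xi>. \<exists>C. \<forall>f u0 u1 t. msol b m (lam \<xi>) f u0 u1 \<and> t > 0 \<longrightarrow> cmod (tderiv \<alpha> f t) \<le> C * g t * (cmod u0 + cmod u1)"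
  shows "\<exists>C. \<forall>u0 u1 u t. (is_solution lam b m u0 u1 u \<and> sob_in lam (real \<alpha> + 2 * \<beta>) u0 \<and> sob_in lam (real \<alpha> - 1 + 2 * \<beta>) u1) \<and> t > 0 \<longrightarrow>
     in_H (\<lambda>\<xi>. complex_of_real (lam \<xi> powr \<beta>) * tderiv \<alpha> (\<lambda>s. u s \<xi>) t) \<and>
     H_norm (\<lambda>\<xi>. complex_of_real (lam \<xi> powr \<beta>) * tderiv \<alpha> (\<lambda>s. u s \<xi>) t)
       \<le> C * g t * (sob_norm lam (real \<alpha> + 2 * \<beta>) u0 + sob_norm lam (real \<alpha> - 1 + 2 * \<beta>) u1)"
proof -
  obtain C where C0: "C \<ge> 0" and CB: "\<And>\<xi> f u0 u1 t. msol b m (lam \<xi>) f u0 u1 \<Longrightarrow> t > 0 \<Longrightarrow>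
     cmod (tderiv \<alpha> f t) \<le> C * g t * (lam \<xi> powr (real \<alpha> / 2) * cmod u0 + lam \<xi> powr ((real \<alpha> - 1) / 2) * cmod u1)"
    using uniform_mode[OF lam_pos discrete b g0 gh low] by blast
  show ?thesis
  proof (intro exI[of _ "sqrt 2 * C"] allI impI conjI)
    fix u0 u1 u and t :: real
    assume A: "(is_solution lam b m u0 u1 u \<and> sob_in lam (real \<alpha> + 2 * \<beta>) u0 \<and> sob_in lam (real \<alpha> - 1 + 2 * \<beta>) u1) \<and> t > 0"
    then have sol: "is_solution lam b m u0 u1 u" and t: "t > 0" by auto
    define a where "a \<xi> = lam \<xi> powr (real \<alpha> + 2 * \<beta>) * (cmod (u0 \<xi>))\<^sup>2" for \<xi>
    define c where "c \<xi> = lam \<xi> powr (real \<alpha> - 1 + 2 * \<beta>) * (cmod (u1 \<xi>))\<^sup>2" for \<xi>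
    have sa: "summable a" using A unfolding a_def sob_in_def by blast
    have sc: "summable c" using A unfolding c_def sob_in_def by blast
    define D where "D \<xi> = complex_of_real (lam \<xi> powr \<beta>) * tderiv \<alpha> (\<lambda>s. u s \<xi>) t" for \<xi>
    have gt: "g t \<ge> 0" using g0 t by blast
    define G where "G = C * g t"
    have G0: "G \<ge> 0" unfolding G_def using C0 gt by simp
    have Dle: "(cmod (D \<xi>))\<^sup>2 \<le> (2 * G\<^sup>2) * (a \<xi> + c \<xi>)" for \<xi>
    proof -
      define L where "L = lam \<xi>"
      have L: "L > 0" unfolding L_def using lam_pos by blast
      define W where "W = L powr (real \<alpha> / 2) * cmod (u0 \<xi>) + L powr ((real \<alpha> - 1) / 2) * cmod (u1 \<xi>)"
      have "cmod (tderiv \<alpha> (\<lambda>s. u s \<xi>) t) \<le> G * W"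
        unfolding G_def W_def L_def by (rule CB[OF sol_msol[OF sol] t])
      then have "cmod (D \<xi>) \<le> L powr \<beta> * (G * W)"
        unfolding D_def L_def[symmetric] by (simp add: norm_mult mult_left_mono)
      also have "\<dots> = G * (L powr \<beta> * W)" by (simp add: algebra_simps)
      finally have d1: "cmod (D \<xi>) \<le> G * (L powr \<beta> * W)" .
      have "(cmod (D \<xi>))\<^sup>2 \<le> (G * (L powr \<beta> * W))\<^sup>2"
        by (rule power_mono[OF d1 norm_ge_zero])
      also have "\<dots> = G\<^sup>2 * (L powr \<beta> * W)\<^sup>2" by (simp add: power_mult_distrib)
      also have "\<dots> \<le> G\<^sup>2 * (2 * (L powr (real \<alpha> + 2 * \<beta>) * (cmod (u0 \<xi>))\<^sup>2 + L powr (real \<alpha> - 1 + 2 * \<beta>) * (cmod (u1 \<xi>))\<^sup>2))"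
        unfolding W_def by (intro mult_left_mono sq_bound L beta) simp
      also have "\<dots> = (2 * G\<^sup>2) * (a \<xi> + c \<xi>)" unfolding a_def c_def L_def by (simp add: algebra_simps)
      finally show ?thesis .
    qed
    have sac: "summable (\<lambda>\<xi>. (2 * G\<^sup>2) * (a \<xi> + c \<xi>))"
      by (intro summable_mult summable_add sa sc)
    have sD: "summable (\<lambda>\<xi>. (cmod (D \<xi>))\<^sup>2)"
      by (rule summable_comparison_test'[OF sac, of 0]) (use Dle in simp)
    then show "in_H (\<lambda>\<xi>. complex_of_real (lam \<xi> powr \<beta>) * tderiv \<alpha> (\<lambda>s. u s \<xi>) t)"
      unfolding in_H_def D_def .
    have a0: "a \<xi> \<ge> 0" and c0: "c \<xi> \<ge> 0" for \<xi> unfolding a_def c_def by auto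
    have "(\<Sum>\<xi>. (cmod (D \<xi>))\<^sup>2) \<le> (\<Sum>\<xi>. (2 * G\<^sup>2) * (a \<xi> + c \<xi>))"
      by (rule suminf_le[OF Dle sD sac])
    also have "\<dots> = (2 * G\<^sup>2) * (suminf a + suminf c)"
      using suminf_mult[OF summable_add[OF sa sc], of "2 * G\<^sup>2"] suminf_add[OF sa sc] by simp
    finally have S: "(\<Sum>\<xi>. (cmod (D \<xi>))\<^sup>2) \<le> (2 * G\<^sup>2) * (suminf a + suminf c)" .
    have Sa: "suminf a \<ge> 0" using suminf_nonneg[OF sa] a0 by blast
    have Sc: "suminf c \<ge> 0" using suminf_nonneg[OF sc] c0 by blast
    have "H_norm D \<le> sqrt ((2 * G\<^sup>2) * (suminf a + suminf c))"
      unfolding H_norm_def using S by simp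
    also have "\<dots> = sqrt 2 * G * sqrt (suminf a + suminf c)"
      using G0 by (simp add: real_sqrt_mult)
    also have "\<dots> \<le> sqrt 2 * G * (sqrt (suminf a) + sqrt (suminf c))"
      using G0 Sa Sc by (intro mult_left_mono sqrt_add_le_add_sqrt) auto
    finally have "H_norm D \<le> sqrt 2 * C * g t * (sqrt (suminf a) + sqrt (suminf c))"
      unfolding G_def by (simp add: algebra_simps)
    then show "H_norm (\<lambda>\<xi>. complex_of_real (lam \<xi> powr \<beta>) * tderiv \<alpha> (\<lambda>s. u s \<xi>) t)
       \<le> sqrt 2 * C * g t * (sob_norm lam (real \<alpha> + 2 * \<beta>) u0 + sob_norm lam (real \<alpha> - 1 + 2 * \<beta>) u1)"
      unfolding sob_norm_def D_def a_def c_def by simp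
  qed
qed

lemma Re_sL_le:
  assumes q: "q \<ge> 0" and x: "b^2/4 - (L+m) \<le> q^2"
  shows "Re (sL b m L) \<le> q"
proof (cases "b^2/4 - (L+m) \<ge> 0")
  case True
  then have "Re (sL b m L) = sqrt (b^2/4 - (L+m))" unfolding sL_def by simp
  also have "\<dots> \<le> sqrt (q^2)" using x by (rule real_sqrt_le_mono)
  also have "\<dots> = q" using q by simp
  finally show ?thesis .
next
  case False
  then show ?thesis unfolding sL_def using q by simp
qed

lemma low_dist':
  fixes g :: "real \<Rightarrow> real" and b m L q :: real
  assumes ne: "L + m \<noteq> b^2/4" and q: "q \<ge> 0" and x: "b^2/4 - (L+m) \<le> q^2"
    and G: "\<forall>t>0. exp ((- b/2 + q) * t) \<le> g t"
  shows "\<exists>C. \<forall>f u0 u1 t. msol b m L f u0 u1 \<and> t > 0 \<longrightarrow> cmod (tderiv k f t) \<le> C * g t * (cmod u0 + cmod u1)"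
proof (rule low_dist[OF ne])
  show "\<forall>t>0. exp (Re (- complex_of_real b / 2 + sL b m L) * t) \<le> g t"
  proof (intro allI impI)
    fix t :: real assume t: "t > 0"
    have "Re (- complex_of_real b / 2 + sL b m L) \<le> - b/2 + q" using Re_sL_le[OF q x] by simp
    then have "Re (- complex_of_real b / 2 + sL b m L) * t \<le> (- b/2 + q) * t" by (rule mult_right_mono[OF _ less_imp_le[OF t]])
    then have "exp (Re (- complex_of_real b / 2 + sL b m L) * t) \<le> exp ((- b/2 + q) * t)" by simp
    also have "\<dots> \<le> g t" using G t by blast
    finally show "exp (Re (- complex_of_real b / 2 + sL b m L) * t) \<le> g t" .
  qed
qed

theorem proposition2p1:
  fixes lam :: "nat \<Rightarrow> real" and b m :: real
  assumes lam_pos: "\<forall>\<xi>. lam \<xi> > 0"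
    and discrete: "\<forall>K. finite {\<xi>. lam \<xi> \<le> K}"
    and b_pos: "b > 0"
    and lm_pos: "Inf (range lam) + m > 0"
  shows "\<forall>(\<alpha>::nat) (\<beta>::real). \<beta> \<ge> 0 \<longrightarrow>
    (let lam0 = Inf (range lam);
         D = (\<lambda>u t. (\<lambda>\<xi>. of_real (lam \<xi> powr \<beta>) * tderiv \<alpha> (\<lambda>s. u s \<xi>) t));
         R = (\<lambda>u0 u1. sob_norm lam (real \<alpha> + 2 * \<beta>) u0 + sob_norm lam (real \<alpha> - 1 + 2 * \<beta>) u1);
         Adm = (\<lambda>u0 u1 u. is_solution lam b m u0 u1 u \<and>
                  sob_in lam (real \<alpha> + 2 * \<beta>) u0 \<and> sob_in lam (real \<alpha> - 1 + 2 * \<beta>) u1)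
     in (b < 2 * sqrt (lam0 + m) \<longrightarrow>
           (\<exists>C. \<forall>u0 u1 u t. Adm u0 u1 u \<and> t > 0 \<longrightarrow>
              in_H (D u t) \<and> H_norm (D u t) \<le> C * exp (- (b / 2) * t) * R u0 u1))
      \<and> (b = 2 * sqrt (lam0 + m) \<longrightarrow>
           (\<exists>C. \<forall>u0 u1 u t. Adm u0 u1 u \<and> t > 0 \<longrightarrow>
              in_H (D u t) \<and> H_norm (D u t) \<le> C * (1 + t) * exp (- (b / 2) * t) * R u0 u1))
      \<and> (2 * sqrt (lam0 + m) < b \<longrightarrow>
           (\<exists>C. \<forall>u0 u1 u t. Adm u0 u1 u \<and> t > 0 \<longrightarrow>
              in_H (D u t) \<and>
              H_norm (D u t) \<le> C * exp (- (b / 2 - sqrt (b\<^sup>2 / 4 - lam0 - m)) * t) * R u0 u1)))"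
proof (intro allI impI)
  fix \<alpha> :: nat and \<beta> :: real
  assume beta: "\<beta> \<ge> 0"
  define lam0 where "lam0 = Inf (range lam)"
  have bdd: "bdd_below (range lam)" using lam_pos by (intro bdd_belowI[of _ 0]) (auto intro: less_imp_le)
  have lam_ge: "lam0 \<le> lam \<xi>" for \<xi> unfolding lam0_def by (rule cInf_lower[OF _ bdd]) simp
  have mu_ge: "lam0 + m \<le> lam \<xi> + m" for \<xi> using lam_ge[of \<xi>] by simp
  have l0: "lam0 + m > 0" using lm_pos unfolding lam0_def .
  have sq: "(sqrt (lam0 + m))^2 = lam0 + m" using l0 by simp
  have case1: "\<exists>C. \<forall>u0 u1 u t. (is_solution lam b m u0 u1 u \<and> sob_in lam (real \<alpha> + 2 * \<beta>) u0 \<and> sob_in lam (real \<alpha> - 1 + 2 * \<beta>) u1) \<and> t > 0 \<longrightarrow>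
     in_H (\<lambda>\<xi>. complex_of_real (lam \<xi> powr \<beta>) * tderiv \<alpha> (\<lambda>s. u s \<xi>) t) \<and>
     H_norm (\<lambda>\<xi>. complex_of_real (lam \<xi> powr \<beta>) * tderiv \<alpha> (\<lambda>s. u s \<xi>) t)
       \<le> C * exp (- (b / 2) * t) * (sob_norm lam (real \<alpha> + 2 * \<beta>) u0 + sob_norm lam (real \<alpha> - 1 + 2 * \<beta>) u1)"
    if lt: "b < 2 * sqrt (lam0 + m)"
  proof -
    have "b^2 < (2 * sqrt (lam0 + m))^2" using lt b_pos by (intro power_strict_mono) auto
    then have b2: "b^2 < 4 * lam0 + 4 * m" by (simp add: power_mult_distrib sq distrib_left)
    have "\<forall>\<xi>. \<exists>C. \<forall>f u0 u1 t. msol b m (lam \<xi>) f u0 u1 \<and> t > 0 \<longrightarrow> cmod (tderiv \<alpha> f t) \<le> C * exp (- (b / 2) * t) * (cmod u0 + cmod u1)"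
    proof
      fix \<xi>
      have "lam \<xi> + m > b^2/4" using mu_ge[of \<xi>] b2 by linarith
      then have ne: "lam \<xi> + m \<noteq> b^2/4" by simp
      have x: "b^2/4 - (lam \<xi> + m) \<le> 0^2" unfolding power_zero_numeral using mu_ge[of \<xi>] b2 by linarith
      show "\<exists>C. \<forall>f u0 u1 t. msol b m (lam \<xi>) f u0 u1 \<and> t > 0 \<longrightarrow> cmod (tderiv \<alpha> f t) \<le> C * exp (- (b / 2) * t) * (cmod u0 + cmod u1)"
        by (rule low_dist'[OF ne _ x]) simp_all
    qed
    from assemble[OF lam_pos discrete b_pos beta _ _ this] show ?thesis by simp
  qed
  have case2: "\<exists>C. \<forall>u0 u1 u t. (is_solution lam b m u0 u1 u \<and> sob_in lam (real \<alpha> + 2 * \<beta>) u0 \<and> sob_in lam (real \<alpha> - 1 + 2 * \<beta>) u1) \<and> t > 0 \<longrightarrow>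
     in_H (\<lambda>\<xi>. complex_of_real (lam \<xi> powr \<beta>) * tderiv \<alpha> (\<lambda>s. u s \<xi>) t) \<and>
     H_norm (\<lambda>\<xi>. complex_of_real (lam \<xi> powr \<beta>) * tderiv \<alpha> (\<lambda>s. u s \<xi>) t)
       \<le> C * (1 + t) * exp (- (b / 2) * t) * (sob_norm lam (real \<alpha> + 2 * \<beta>) u0 + sob_norm lam (real \<alpha> - 1 + 2 * \<beta>) u1)"
    if eq: "b = 2 * sqrt (lam0 + m)"
  proof -
    have b2: "b^2 = 4 * lam0 + 4 * m" unfolding eq by (simp add: power_mult_distrib sq distrib_left)
    define g where "g t = (1 + t) * exp (- (b / 2) * t)" for t :: real
    have "\<forall>\<xi>. \<exists>C. \<forall>f u0 u1 t. msol b m (lam \<xi>) f u0 u1 \<and> t > 0 \<longrightarrow> cmod (tderiv \<alpha> f t) \<le> C * g t * (cmod u0 + cmod u1)"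
    proof
      fix \<xi>
      show "\<exists>C. \<forall>f u0 u1 t. msol b m (lam \<xi>) f u0 u1 \<and> t > 0 \<longrightarrow> cmod (tderiv \<alpha> f t) \<le> C * g t * (cmod u0 + cmod u1)"
      proof (cases "lam \<xi> + m = b^2/4")
        case True
        show ?thesis by (rule low_eq[OF True, where c = 1]) (simp add: g_def)
      next
        case False
        have x: "b^2/4 - (lam \<xi> + m) \<le> 0^2" unfolding power_zero_numeral using mu_ge[of \<xi>] b2 by linarith
        show ?thesis
          by (rule low_dist'[OF False _ x]) (auto simp: g_def)
      qed
    qed
    from assemble[OF lam_pos discrete b_pos beta _ _ this] show ?thesis by (simp add: g_def mult.assoc)
  qed
  have case3: "\<exists>C. \<forall>u0 u1 u t. (is_solution lam b m u0 u1 u \<and> sob_in lam (real \<alpha> + 2 * \<beta>) u0 \<and> sob_in lam (real \<alpha> - 1 + 2 * \<beta>) u1) \<and> t > 0 \<longrightarrow>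
     in_H (\<lambda>\<xi>. complex_of_real (lam \<xi> powr \<beta>) * tderiv \<alpha> (\<lambda>s. u s \<xi>) t) \<and>
     H_norm (\<lambda>\<xi>. complex_of_real (lam \<xi> powr \<beta>) * tderiv \<alpha> (\<lambda>s. u s \<xi>) t)
       \<le> C * exp (- (b / 2 - sqrt (b\<^sup>2 / 4 - lam0 - m)) * t) * (sob_norm lam (real \<alpha> + 2 * \<beta>) u0 + sob_norm lam (real \<alpha> - 1 + 2 * \<beta>) u1)"
    if gt: "2 * sqrt (lam0 + m) < b"
  proof -
    have "(2 * sqrt (lam0 + m))^2 < b^2" using gt l0 by (intro power_strict_mono) auto
    then have b2: "4 * lam0 + 4 * m < b^2" by (simp add: power_mult_distrib sq distrib_left)
    define q where "q = sqrt (b\<^sup>2 / 4 - lam0 - m)"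
    have q0: "q > 0" unfolding q_def using b2 by simp
    have q2: "q^2 = b\<^sup>2 / 4 - lam0 - m" unfolding q_def using b2 by simp
    define g where "g t = exp (- (b / 2 - q) * t)" for t :: real
    have "\<forall>\<xi>. \<exists>C. \<forall>f u0 u1 t. msol b m (lam \<xi>) f u0 u1 \<and> t > 0 \<longrightarrow> cmod (tderiv \<alpha> f t) \<le> C * g t * (cmod u0 + cmod u1)"
    proof
      fix \<xi>
      show "\<exists>C. \<forall>f u0 u1 t. msol b m (lam \<xi>) f u0 u1 \<and> t > 0 \<longrightarrow> cmod (tderiv \<alpha> f t) \<le> C * g t * (cmod u0 + cmod u1)"
      proof (cases "lam \<xi> + m = b^2/4")
        case True
        show ?thesis
        proof (rule low_eq[OF True, where c = "1 + 1/q"], intro allI impI)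
          fix t :: real assume t: "t > 0"
          have "1 + t \<le> (1 + 1/q) * (1 + q * t)"
            using q0 t by (simp add: algebra_simps)
          also have "\<dots> \<le> (1 + 1/q) * exp (q * t)"
            using q0 by (intro mult_left_mono exp_ge_add_one_self) auto
          finally have "(1 + t) * exp (- b / 2 * t) \<le> (1 + 1/q) * exp (q * t) * exp (- b / 2 * t)"
            by (rule mult_right_mono) simp
          also have "\<dots> = (1 + 1/q) * g t"
            unfolding g_def by (simp add: exp_add[symmetric] algebra_simps)
          finally show "(1 + t) * exp (- b / 2 * t) \<le> (1 + 1/q) * g t" .
        qed
      next
        case False
        have x: "b^2/4 - (lam \<xi> + m) \<le> q^2" using mu_ge[of \<xi>] unfolding q2 by linarith
        show ?thesis
          by (rule low_dist'[OF False _ x]) (use q0 in \<open>auto simp: g_def\<close>)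
      qed
    qed
    moreover have "\<forall>t>0. exp (- b / 2 * t) \<le> g t"
    proof (intro allI impI)
      fix t :: real assume t: "t > 0"
      have "q * t \<ge> 0" using q0 t by simp
      then have "- b/2 * t \<le> - (b/2 - q) * t" by (simp add: algebra_simps)
      then show "exp (- b / 2 * t) \<le> g t" unfolding g_def by simp
    qed
    ultimately show ?thesis using assemble[OF lam_pos discrete b_pos beta, of g] unfolding g_def q_def by simp
  qed
  show "let lam0 = Inf (range lam);
         D = (\<lambda>u t. (\<lambda>\<xi>. of_real (lam \<xi> powr \<beta>) * tderiv \<alpha> (\<lambda>s. u s \<xi>) t));
         R = (\<lambda>u0 u1. sob_norm lam (real \<alpha> + 2 * \<beta>) u0 + sob_norm lam (real \<alpha> - 1 + 2 * \<beta>) u1);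
         Adm = (\<lambda>u0 u1 u. is_solution lam b m u0 u1 u \<and>
                  sob_in lam (real \<alpha> + 2 * \<beta>) u0 \<and> sob_in lam (real \<alpha> - 1 + 2 * \<beta>) u1)
     in (b < 2 * sqrt (lam0 + m) \<longrightarrow>
           (\<exists>C. \<forall>u0 u1 u t. Adm u0 u1 u \<and> t > 0 \<longrightarrow>
              in_H (D u t) \<and> H_norm (D u t) \<le> C * exp (- (b / 2) * t) * R u0 u1))
      \<and> (b = 2 * sqrt (lam0 + m) \<longrightarrow>
           (\<exists>C. \<forall>u0 u1 u t. Adm u0 u1 u \<and> t > 0 \<longrightarrow>
              in_H (D u t) \<and> H_norm (D u t) \<le> C * (1 + t) * exp (- (b / 2) * t) * R u0 u1))
      \<and> (2 * sqrt (lam0 + m) < b \<longrightarrow>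
           (\<exists>C. \<forall>u0 u1 u t. Adm u0 u1 u \<and> t > 0 \<longrightarrow>
              in_H (D u t) \<and>
              H_norm (D u t) \<le> C * exp (- (b / 2 - sqrt (b\<^sup>2 / 4 - lam0 - m)) * t) * R u0 u1))"
    unfolding Let_def lam0_def[symmetric] using case1 case2 case3 by blast
qed

end
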